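(* Fix integers $a,b\ge 2$ and $\varepsilon>0$. Let $n\to\infty$ and let $m=m(n)$ satisfy $m/n\to\infty$. Then all hypergraphs $H\in\mathcal{H}(a,n,m)$, except for $o\!\left(\binom{\binom{n}{a}}{m}\right)$ of them, have the following property: for every coloring $C:[n]\to[b]$ and every $a$-element multiset $T$ of colors from $[b]$, the number of hyperedges of $H$ whose color multiset with respect to $C$ is $T$ lies in the interval $\left[(p^C(T)-\varepsilon)m,\ (p^C(T)+\varepsilon)m\right]$.
   Context: $\mathcal{H}(a,n,m)$ is the family of all $a$-uniform hypergraphs on vertex set $[n]$ with exactly $m$ hyperedges (each hyperedge an $a$-element subset of $[n]$); so $|\mathcal{H}(a,n,m)|=\binom{\binom{n}{a}}{m}$. A coloring $C:[n]\to[b]$ is an arbitrary map (not necessarily proper). For a coloring $C$, $n_j^C$ is the number of vertices of color $j$. The color multiset of a hyperedge $e$ with respect to $C$ is the multiset of colors $C(v)$, $v\in e$, counted with multiplicity. For an $a$-element multiset $T$ of colors, $I_T(j)$ is the multiplicity of $j$ in $T$, and $p^C(T)=\prod_{j=1}^b\binom{n_j^C}{I_T(j)}\big/\binom{n}{a}$, i.e. the probability that a uniformly random $a$-subset of $[n]$ has color multiset $T$. *)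

theory Defs
  imports Complex_Main "HOL-Library.Multiset"
begin

definition hypergraphs :: "nat \<Rightarrow> nat \<Rightarrow> nat \<Rightarrow> nat set set set" where
  "hypergraphs a n m =
     {H. H \<subseteq> {e. e \<subseteq> {1..n} \<and> card e = a} \<and> card H = m}"

definition is_coloring :: "nat \<Rightarrow> nat \<Rightarrow> (nat \<Rightarrow> nat) \<Rightarrow> bool" where
  "is_coloring n b C \<longleftrightarrow> (\<forall>v\<in>{1..n}. C v \<in> {1..b})"

definition color_class_size :: "nat \<Rightarrow> (nat \<Rightarrow> nat) \<Rightarrow> nat \<Rightarrow> nat" where
  "color_class_size n C j = card {v\<in>{1..n}. C v = j}"

definition color_multiset :: "(nat \<Rightarrow> nat) \<Rightarrow> nat set \<Rightarrow> nat multiset" where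
  "color_multiset C e = image_mset C (mset_set e)"

definition color_multisets :: "nat \<Rightarrow> nat \<Rightarrow> nat multiset set" where
  "color_multisets a b = {T. set_mset T \<subseteq> {1..b} \<and> size T = a}"

definition pC :: "nat \<Rightarrow> nat \<Rightarrow> nat \<Rightarrow> (nat \<Rightarrow> nat) \<Rightarrow> nat multiset \<Rightarrow> real" where
  "pC a b n C T =
     (\<Prod>j\<in>{1..b}. real (color_class_size n C j choose count T j)) / real (n choose a)"

definition edges_with_type :: "nat set set \<Rightarrow> (nat \<Rightarrow> nat) \<Rightarrow> nat multiset \<Rightarrow> nat" where
  "edges_with_type H C T = card {e\<in>H. color_multiset C e = T}"

definition good_hypergraph ::
  "nat \<Rightarrow> nat \<Rightarrow> real \<Rightarrow> nat \<Rightarrow> nat \<Rightarrow> nat set set \<Rightarrow> bool" where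
  "good_hypergraph a b \<epsilon> n m H \<longleftrightarrow>
     (\<forall>C. is_coloring n b C \<longrightarrow> (\<forall>T\<in>color_multisets a b.
        (pC a b n C T - \<epsilon>) * real m \<le> real (edges_with_type H C T) \<and>
        real (edges_with_type H C T) \<le> (pC a b n C T + \<epsilon>) * real m))"

end

theory Submission
  imports Defs "HOL-Library.FuncSet"
begin


lemma card_supersets:
  assumes "finite U" "K \<subseteq> U" "card K \<le> m"
  shows "card {H. H \<subseteq> U \<and> card H = m \<and> K \<subseteq> H} = (card U - card K) choose (m - card K)"
proof -
  have fK: "finite K" using assms finite_subset by blast
  have "bij_betw (\<lambda>H. H - K) {H. H \<subseteq> U \<and> card H = m \<and> K \<subseteq> H} {D. D \<subseteq> U - K \<and> card D = m - card K}"
  proof (rule bij_betw_byWitness[where f'="\<lambda>D. D \<union> K"])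
    show "\<forall>a\<in>{H. H \<subseteq> U \<and> card H = m \<and> K \<subseteq> H}. a - K \<union> K = a" by auto
    show "\<forall>a\<in>{D. D \<subseteq> U - K \<and> card D = m - card K}. a \<union> K - K = a" by auto
    show "(\<lambda>H. H - K) ` {H. H \<subseteq> U \<and> card H = m \<and> K \<subseteq> H} \<subseteq> {D. D \<subseteq> U - K \<and> card D = m - card K}"
      using fK by (auto simp: card_Diff_subset)
    show "(\<lambda>D. D \<union> K) ` {D. D \<subseteq> U - K \<and> card D = m - card K} \<subseteq> {H. H \<subseteq> U \<and> card H = m \<and> K \<subseteq> H}"
    proof clarify
      fix D assume D: "D \<subseteq> U - K" "card D = m - card K"
      have fD: "finite D" using D assms finite_subset by blast
      have "card (D \<union> K) = card D + card K" using D fD fK by (intro card_Un_disjoint) auto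
      then show "D \<union> K \<subseteq> U \<and> card (D \<union> K) = m \<and> K \<subseteq> D \<union> K" using D assms by auto
    qed
  qed
  then have "card {H. H \<subseteq> U \<and> card H = m \<and> K \<subseteq> H} = card {D. D \<subseteq> U - K \<and> card D = m - card K}"
    by (rule bij_betw_same_card)
  also have "\<dots> = card (U - K) choose (m - card K)" using assms by (intro n_subsets) auto
  also have "card (U - K) = card U - card K" using assms fK by (simp add: card_Diff_subset)
  finally show ?thesis .
qed

lemma choose_absorb_aux: "(s choose Suc k) * Suc k = (s choose k) * (s - k)"
proof (cases s)
  case 0 then show ?thesis by simp
next
  case (Suc s')
  have "(s - k) * (s choose k) = s * ((s - 1) choose k)" by (rule binomial_absorb_comp)
  moreover have "Suc k * (Suc s' choose Suc k) = Suc s' * (s' choose k)" by (rule Suc_times_binomial)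
  ultimately show ?thesis using Suc by (simp add: mult.commute)
qed

lemma choose_ratio:
  assumes "s \<le> N"
  shows "real (s choose k) * real N ^ k \<le> real (N choose k) * real s ^ k"
proof (induction k)
  case 0 then show ?case by simp
next
  case (Suc k)
  have e1: "real (s choose Suc k) * real (Suc k) = real (s choose k) * real (s - k)"
    by (simp only: of_nat_mult[symmetric] choose_absorb_aux)
  have e2: "real (N choose Suc k) * real (Suc k) = real (N choose k) * real (N - k)"
    by (simp only: of_nat_mult[symmetric] choose_absorb_aux)
  have key: "real (s - k) * real N \<le> real (N - k) * real s"
  proof (cases "k \<le> s")
    case True
    then have "k \<le> N" using assms by simp
    moreover have "real k * real s \<le> real N * real k" using assms by (metis mult.commute mult_left_mono of_nat_0_le_iff of_nat_le_iff)
    ultimately show ?thesis using True assms by (simp add: of_nat_diff algebra_simps)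
  next
    case False then show ?thesis by simp
  qed
  have "real (s choose Suc k) * real N ^ Suc k * real (Suc k) = (real (s choose Suc k) * real (Suc k)) * (real N ^ k * real N)"
    by (simp only: power_Suc mult_ac)
  also have "\<dots> = (real (s choose k) * real N ^ k) * (real (s - k) * real N)"
    unfolding e1 by (simp only: mult_ac)
  also have "\<dots> \<le> (real (N choose k) * real s ^ k) * (real (N - k) * real s)"
    by (rule mult_mono[OF Suc.IH key]) simp_all
  also have "\<dots> = (real (N choose Suc k) * real (Suc k)) * (real s ^ k * real s)"
    unfolding e2 by (simp only: mult_ac)
  also have "\<dots> = real (N choose Suc k) * real s ^ Suc k * real (Suc k)"
    by (simp only: power_Suc mult_ac)
  finally show ?case by (simp del: of_nat_Suc)
qed

lemma sum_choose_inter: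
  assumes "finite U" "S \<subseteq> U" and True: "k \<le> m"
  shows "(\<Sum>H\<in>{H. H \<subseteq> U \<and> card H = m}. card (H \<inter> S) choose k)
         = (card S choose k) * ((card U - k) choose (m - k))"
proof -
  define HH where "HH = {H. H \<subseteq> U \<and> card H = m}"
  define KK where "KK = {K. K \<subseteq> S \<and> card K = k}"
  have fS: "finite S" using assms finite_subset by blast
  have fHH: "finite HH" unfolding HH_def using assms by (simp add: finite_Collect_subsets)
  have fKK: "finite KK" unfolding KK_def using fS by (simp add: finite_Collect_subsets)
  have "(\<Sum>H\<in>HH. card (H \<inter> S) choose k) = (\<Sum>H\<in>HH. \<Sum>K\<in>KK. if K \<subseteq> H then 1 else 0)"
  proof (rule sum.cong[OF refl])
    fix H assume "H \<in> HH"
    have "card (H \<inter> S) choose k = card {K. K \<subseteq> H \<inter> S \<and> card K = k}"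
      using fS by (intro n_subsets[symmetric]) simp
    also have "{K. K \<subseteq> H \<inter> S \<and> card K = k} = {K\<in>KK. K \<subseteq> H}" unfolding KK_def by auto
    also have "card \<dots> = (\<Sum>K\<in>KK. if K \<subseteq> H then 1 else 0)"
      using fKK by (simp add: sum.If_cases Int_def)
    finally show "card (H \<inter> S) choose k = (\<Sum>K\<in>KK. if K \<subseteq> H then 1 else 0)" .
  qed
  also have "\<dots> = (\<Sum>K\<in>KK. \<Sum>H\<in>HH. if K \<subseteq> H then 1 else 0)" by (rule sum.swap)
  also have "\<dots> = (\<Sum>K\<in>KK. (card U - k) choose (m - k))"
  proof (rule sum.cong[OF refl])
    fix K assume K: "K \<in> KK"
    have "(\<Sum>H\<in>HH. if K \<subseteq> H then 1 else 0) = card {H\<in>HH. K \<subseteq> H}"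
      using fHH by (simp add: sum.If_cases Int_def)
    also have "{H\<in>HH. K \<subseteq> H} = {H. H \<subseteq> U \<and> card H = m \<and> K \<subseteq> H}" unfolding HH_def by auto
    also have "card \<dots> = (card U - card K) choose (m - card K)"
      using K True assms unfolding KK_def by (intro card_supersets) auto
    finally show "(\<Sum>H\<in>HH. if K \<subseteq> H then 1 else 0) = (card U - k) choose (m - k)"
      using K unfolding KK_def by simp
  qed
  also have "\<dots> = card KK * ((card U - k) choose (m - k))" by simp
  also have "card KK = card S choose k" unfolding KK_def using fS by (rule n_subsets)
  finally show ?thesis unfolding HH_def .
qed

lemma choose_ratio2:
  assumes "s \<le> N" "N > 0" "k \<le> m" "m \<le> N"
  shows "real ((s choose k) * ((N - k) choose (m - k))) \<le> real (N choose m) * real (m choose k) * (real s / real N) ^ k"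
proof -
  have r: "real (s choose k) \<le> real (N choose k) * (real s / real N) ^ k"
    using choose_ratio[OF assms(1), of k] assms(2) by (simp add: power_divide field_simps)
  have "real ((s choose k) * ((N - k) choose (m - k))) = real (s choose k) * real ((N - k) choose (m - k))" by simp
  also have "\<dots> \<le> (real (N choose k) * (real s / real N) ^ k) * real ((N - k) choose (m - k))"
    using r by (intro mult_right_mono) auto
  also have "\<dots> = real ((N choose k) * ((N - k) choose (m - k))) * (real s / real N) ^ k" by simp
  also have "(N choose k) * ((N - k) choose (m - k)) = (N choose m) * (m choose k)"
    using choose_mult[OF assms(3) assms(4)] by simp
  finally show ?thesis by simp
qed

lemma genfun_bound:
  assumes "finite U" "S \<subseteq> U" "card U > 0" "t \<ge> 0"
  shows "(\<Sum>H\<in>{H. H \<subseteq> U \<and> card H = m}. (1 + t) ^ card (H \<inter> S))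
         \<le> real (card U choose m) * (1 + t * real (card S) / real (card U)) ^ m"
proof (cases "m \<le> card U")
  case False
  have fHH: "finite {H. H \<subseteq> U \<and> card H = m}" using assms by (simp add: finite_Collect_subsets)
  have "card {H. H \<subseteq> U \<and> card H = m} = 0" using assms False by (simp add: n_subsets)
  then have E: "{H. H \<subseteq> U \<and> card H = m} = {}" using fHH by (simp only: card_0_eq)
  have Z: "card U choose m = 0" using False by simp
  show ?thesis unfolding E Z by simp
next
  case True
  define HH where "HH = {H. H \<subseteq> U \<and> card H = m}"
  define N where "N = card U"
  define s where "s = card S"
  have sN: "s \<le> N" unfolding s_def N_def using assms card_mono by blast
  have Npos: "N > 0" using assms N_def by simp
  have xj: "(1 + t) ^ card (H \<inter> S) = (\<Sum>k\<le>m. real (card (H \<inter> S) choose k) * t ^ k)"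
    if H: "H \<in> HH" for H
  proof -
    have fH: "finite H" using H assms finite_subset unfolding HH_def by blast
    have jm: "card (H \<inter> S) \<le> m" using H fH card_mono[of H "H \<inter> S"] unfolding HH_def by auto
    have "(1 + t) ^ card (H \<inter> S) = (t + 1) ^ card (H \<inter> S)" by (simp add: add.commute)
    also have "\<dots> = (\<Sum>k\<le>card (H \<inter> S). real (card (H \<inter> S) choose k) * t ^ k)"
      by (simp add: binomial_ring)
    also have "\<dots> = (\<Sum>k\<le>m. real (card (H \<inter> S) choose k) * t ^ k)"
      using jm by (intro sum.mono_neutral_left) auto
    finally show ?thesis .
  qed
  have "(\<Sum>H\<in>HH. (1 + t) ^ card (H \<inter> S)) = (\<Sum>H\<in>HH. \<Sum>k\<le>m. real (card (H \<inter> S) choose k) * t ^ k)"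
    using xj by simp
  also have "\<dots> = (\<Sum>k\<le>m. \<Sum>H\<in>HH. real (card (H \<inter> S) choose k) * t ^ k)" by (rule sum.swap)
  also have "\<dots> = (\<Sum>k\<le>m. t ^ k * real (\<Sum>H\<in>HH. card (H \<inter> S) choose k))"
    by (simp add: sum_distrib_left mult.commute)
  also have "\<dots> = (\<Sum>k\<le>m. t ^ k * real ((s choose k) * ((N - k) choose (m - k))))"
    unfolding HH_def s_def N_def using assms by (intro sum.cong refl) (simp add: sum_choose_inter)
  also have "\<dots> \<le> (\<Sum>k\<le>m. t ^ k * (real (N choose m) * real (m choose k) * (real s / real N) ^ k))"
    using assms True sN Npos unfolding N_def
    by (intro sum_mono mult_left_mono choose_ratio2) (auto simp: N_def)
  also have "\<dots> = real (N choose m) * (\<Sum>k\<le>m. real (m choose k) * (t * real s / real N) ^ k * 1 ^ (m - k))"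
    unfolding sum_distrib_left by (intro sum.cong refl) (simp add: power_mult_distrib power_divide)
  also have "\<dots> = real (N choose m) * (t * real s / real N + 1) ^ m"
    by (simp only: binomial_ring)
  finally show ?thesis unfolding HH_def N_def s_def by (simp add: add.commute)
qed

lemma exponent_bound:
  fixes p \<epsilon> :: real
  assumes "0 \<le> p" "p \<le> 1" "\<epsilon> > 0"
  defines "t \<equiv> \<epsilon> / (2 * (1 + \<epsilon>))"
  shows "t * p - (p + \<epsilon>) * ln (1 + t) \<le> - (\<epsilon>\<^sup>2 / (4 * (1 + \<epsilon>)))"
proof -
  have t0: "0 \<le> t" "t \<le> 1" using assms unfolding t_def by (auto simp: field_simps)
  have "t - t\<^sup>2 \<le> ln (1 + t)" using t0 by (rule ln_one_plus_pos_lower_bound)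
  then have "(p + \<epsilon>) * (t - t\<^sup>2) \<le> (p + \<epsilon>) * ln (1 + t)" using assms by (intro mult_left_mono) auto
  then have "t * p - (p + \<epsilon>) * ln (1 + t) \<le> t * p - (p + \<epsilon>) * (t - t\<^sup>2)" by simp
  also have "\<dots> = - \<epsilon> * t + (p + \<epsilon>) * t\<^sup>2" by (simp add: algebra_simps)
  also have "\<dots> \<le> - \<epsilon> * t + (1 + \<epsilon>) * t\<^sup>2" using assms by (intro add_left_mono mult_right_mono) auto
  also have "\<dots> = - (\<epsilon>\<^sup>2 / (4 * (1 + \<epsilon>)))"
  proof -
    have d: "1 + \<epsilon> \<noteq> 0" using assms by simp
    have gen: "\<And>d e::real. d \<noteq> 0 \<Longrightarrow> d * (e / (2 * d))\<^sup>2 = e\<^sup>2 / (4 * d)"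
      by (simp add: power2_eq_square field_simps)
    have a1: "(1 + \<epsilon>) * t\<^sup>2 = \<epsilon>\<^sup>2 / (4 * (1 + \<epsilon>))"
      unfolding t_def using d by (rule gen)
    have a2: "\<epsilon> * t = \<epsilon>\<^sup>2 / (2 * (1 + \<epsilon>))"
      unfolding t_def using d by (simp add: power2_eq_square field_simps)
    have "- \<epsilon> * t + (1 + \<epsilon>) * t\<^sup>2 = - (\<epsilon>\<^sup>2 / (2 * (1 + \<epsilon>))) + \<epsilon>\<^sup>2 / (4 * (1 + \<epsilon>))"
      using a1 a2 by simp
    also have "\<dots> = - (\<epsilon>\<^sup>2 / (4 * (1 + \<epsilon>)))"
    proof -
      have gen2: "\<And>d x::real. d \<noteq> 0 \<Longrightarrow> - (x / (2 * d)) + x / (4 * d) = - (x / (4 * d))"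
        by (simp add: field_simps)
      show ?thesis using d by (rule gen2)
    qed
    finally show ?thesis .
  qed
  finally show ?thesis .
qed

lemma upper_tail:
  fixes \<epsilon> :: real
  assumes "finite U" "S \<subseteq> U" "card U > 0" "\<epsilon> > 0"
  shows "real (card {H. H \<subseteq> U \<and> card H = m \<and>
            (real (card S) / real (card U) + \<epsilon>) * real m \<le> real (card (H \<inter> S))})
         \<le> real (card U choose m) * exp (- (\<epsilon>\<^sup>2 / (4 * (1 + \<epsilon>))) * real m)"
proof -
  define p where "p = real (card S) / real (card U)"
  define t where "t = \<epsilon> / (2 * (1 + \<epsilon>))"
  define HH where "HH = {H. H \<subseteq> U \<and> card H = m}"
  define B where "B = {H. H \<subseteq> U \<and> card H = m \<and> (p + \<epsilon>) * real m \<le> real (card (H \<inter> S))}"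
  have p0: "0 \<le> p" "p \<le> 1" unfolding p_def using assms card_mono[of U S] by (auto simp: field_simps)
  have t0: "0 < t" unfolding t_def using assms by simp
  have fHH: "finite HH" unfolding HH_def using assms by (simp add: finite_Collect_subsets)
  have BH: "B \<subseteq> HH" unfolding B_def HH_def by auto
  have lx: "0 \<le> ln (1 + t)" using t0 by simp
  have "real (card B) * exp ((p + \<epsilon>) * real m * ln (1 + t)) = (\<Sum>H\<in>B. exp ((p + \<epsilon>) * real m * ln (1 + t)))"
    by simp
  also have "\<dots> \<le> (\<Sum>H\<in>B. (1 + t) ^ card (H \<inter> S))"
  proof (rule sum_mono)
    fix H assume "H \<in> B"
    then have "(p + \<epsilon>) * real m * ln (1 + t) \<le> real (card (H \<inter> S)) * ln (1 + t)"
      unfolding B_def using lx by (intro mult_right_mono) auto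
    then have "exp ((p + \<epsilon>) * real m * ln (1 + t)) \<le> exp (real (card (H \<inter> S)) * ln (1 + t))" by simp
    also have "\<dots> = (1 + t) ^ card (H \<inter> S)" using t0 by (simp add: exp_of_nat_mult)
    finally show "exp ((p + \<epsilon>) * real m * ln (1 + t)) \<le> (1 + t) ^ card (H \<inter> S)" .
  qed
  also have "\<dots> \<le> (\<Sum>H\<in>HH. (1 + t) ^ card (H \<inter> S))"
    using fHH BH t0 by (intro sum_mono2) auto
  also have "\<dots> \<le> real (card U choose m) * (1 + t * p) ^ m"
    unfolding HH_def p_def using genfun_bound[OF assms(1-3), of t m] t0 by (simp add: mult.commute)
  also have "\<dots> \<le> real (card U choose m) * exp (t * p * real m)"
  proof -
    have "exp (ln (1 + t * p)) = 1 + t * p" using t0 p0 by (intro exp_ln) (simp add: add_pos_nonneg)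
    then have "(1 + t * p) ^ m = exp (real m * ln (1 + t * p))"
      by (simp add: exp_of_nat_mult)
    also have "\<dots> \<le> exp (real m * (t * p))" using t0 p0
      by (intro exp_mono mult_left_mono ln_add_one_self_le_self) auto
    finally show ?thesis by (intro mult_left_mono) (auto simp: mult_ac)
  qed
  finally have "real (card B) * exp ((p + \<epsilon>) * real m * ln (1 + t)) \<le> real (card U choose m) * exp (t * p * real m)" .
  then have "real (card B) \<le> real (card U choose m) * exp (t * p * real m) / exp ((p + \<epsilon>) * real m * ln (1 + t))"
    by (simp add: field_simps)
  also have "\<dots> = real (card U choose m) * exp (t * p * real m - (p + \<epsilon>) * real m * ln (1 + t))"
    by (simp add: exp_diff)
  also have "\<dots> = real (card U choose m) * exp (real m * (t * p - (p + \<epsilon>) * ln (1 + t)))"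
  proof -
    have "t * p * real m - (p + \<epsilon>) * real m * ln (1 + t) = real m * (t * p - (p + \<epsilon>) * ln (1 + t))"
      by (simp add: algebra_simps)
    then show ?thesis by simp
  qed
  also have "\<dots> \<le> real (card U choose m) * exp (real m * (- (\<epsilon>\<^sup>2 / (4 * (1 + \<epsilon>)))))"
  proof -
    have "real m * (t * p - (p + \<epsilon>) * ln (1 + t)) \<le> real m * (- (\<epsilon>\<^sup>2 / (4 * (1 + \<epsilon>))))"
      using exponent_bound[OF p0 assms(4)] unfolding t_def by (rule mult_left_mono) simp
    then have "exp (real m * (t * p - (p + \<epsilon>) * ln (1 + t))) \<le> exp (real m * (- (\<epsilon>\<^sup>2 / (4 * (1 + \<epsilon>)))))"
      by simp
    then show ?thesis by (rule mult_left_mono) simp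
  qed
  finally show ?thesis unfolding B_def p_def by (simp add: mult.commute)
qed

lemma two_tail:
  fixes \<epsilon> :: real
  assumes "finite U" "S \<subseteq> U" "card U > 0" "\<epsilon> > 0"
  shows "real (card {H. H \<subseteq> U \<and> card H = m \<and>
            (real (card (H \<inter> S)) < (real (card S) / real (card U) - \<epsilon>) * real m \<or>
             (real (card S) / real (card U) + \<epsilon>) * real m < real (card (H \<inter> S)))})
         \<le> 2 * real (card U choose m) * exp (- (\<epsilon>\<^sup>2 / (4 * (1 + \<epsilon>))) * real m)"
proof -
  define p where "p = real (card S) / real (card U)"
  define B1 where "B1 = {H. H \<subseteq> U \<and> card H = m \<and>
            (real (card S) / real (card U) + \<epsilon>) * real m \<le> real (card (H \<inter> S))}"
  define B2 where "B2 = {H. H \<subseteq> U \<and> card H = m \<and>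
            (real (card (U - S)) / real (card U) + \<epsilon>) * real m \<le> real (card (H \<inter> (U - S)))}"
  have fS: "finite S" using assms finite_subset by blast
  have cUS: "real (card (U - S)) = real (card U) - real (card S)"
    using assms fS by (simp add: card_Diff_subset of_nat_diff card_mono)
  have sub: "{H. H \<subseteq> U \<and> card H = m \<and>
            (real (card (H \<inter> S)) < (p - \<epsilon>) * real m \<or>
             (p + \<epsilon>) * real m < real (card (H \<inter> S)))} \<subseteq> B1 \<union> B2"
  proof (rule subsetI)
    fix H assume HH: "H \<in> {H. H \<subseteq> U \<and> card H = m \<and>
            (real (card (H \<inter> S)) < (p - \<epsilon>) * real m \<or>
             (p + \<epsilon>) * real m < real (card (H \<inter> S)))}"
    then have H: "H \<subseteq> U" "card H = m"
      and D: "real (card (H \<inter> S)) < (p - \<epsilon>) * real m \<or> (p + \<epsilon>) * real m < real (card (H \<inter> S))"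
      by auto
    show "H \<in> B1 \<union> B2"
    proof (cases "H \<in> B1")
      case True then show ?thesis by simp
    next
      case nB1: False
    have fH: "finite H" using H assms finite_subset by blast
    have "H \<inter> (U - S) = H - (H \<inter> S)" using H by auto
    then have cH: "real (card (H \<inter> (U - S))) = real m - real (card (H \<inter> S))"
      using fH H card_mono[OF fH, of "H \<inter> S"] by (simp add: card_Diff_subset of_nat_diff)
    have "real (card (H \<inter> S)) < (p - \<epsilon>) * real m" using D nB1 H unfolding B1_def p_def by auto
    moreover have "real (card (U - S)) / real (card U) = 1 - p"
      unfolding p_def cUS using assms by (simp add: diff_divide_distrib card_gt_0_iff)
    moreover have "(1 - p + \<epsilon>) * real m = real m - (p - \<epsilon>) * real m" by (simp add: algebra_simps)
    ultimately have "(real (card (U - S)) / real (card U) + \<epsilon>) * real m \<le> real (card (H \<inter> (U - S)))"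
      using cH by simp
    then show ?thesis unfolding B2_def using H by auto
    qed
  qed
  have fin: "finite (B1 \<union> B2)" unfolding B1_def B2_def using assms
    by (intro finite_subset[OF _ finite_Collect_subsets[of U]]) auto
  have "real (card {H. H \<subseteq> U \<and> card H = m \<and>
            (real (card (H \<inter> S)) < (p - \<epsilon>) * real m \<or>
             (p + \<epsilon>) * real m < real (card (H \<inter> S)))}) \<le> real (card (B1 \<union> B2))"
    using card_mono[OF fin sub] by simp
  also have "\<dots> \<le> real (card B1) + real (card B2)" using card_Un_le[of B1 B2] by simp
  also have "\<dots> \<le> real (card U choose m) * exp (- (\<epsilon>\<^sup>2 / (4 * (1 + \<epsilon>))) * real m)
     + real (card U choose m) * exp (- (\<epsilon>\<^sup>2 / (4 * (1 + \<epsilon>))) * real m)"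
    unfolding B1_def B2_def
    by (intro add_mono upper_tail assms) (use assms in auto)
  finally show ?thesis unfolding p_def by simp
qed



lemma count_color_multiset:
  assumes "finite e"
  shows "count (color_multiset C e) j = card {v\<in>e. C v = j}"
proof -
  have "count (color_multiset C e) j = (\<Sum>y\<in>C -` {j} \<inter> e. count (mset_set e) y)"
    unfolding color_multiset_def count_image_mset using assms by simp
  also have "\<dots> = (\<Sum>y\<in>C -` {j} \<inter> e. 1)" using assms by (intro sum.cong) auto
  also have "C -` {j} \<inter> e = {v\<in>e. C v = j}" by auto
  finally show ?thesis by simp
qed

lemma size_as_sum:
  assumes "set_mset T \<subseteq> B" "finite B"
  shows "size T = (\<Sum>j\<in>B. count T j)"
proof -
  have "size T = sum (count T) (set_mset T)" by (rule size_multiset_overloaded_eq)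
  also have "\<dots> = (\<Sum>j\<in>B. count T j)" using assms
    by (intro sum.mono_neutral_left) (auto simp: not_in_iff)
  finally show ?thesis .
qed

lemma color_multiset_eq_iff:
  assumes "e \<subseteq> {1..n}" "is_coloring n b C" "set_mset T \<subseteq> {1..b}"
  shows "color_multiset C e = T \<longleftrightarrow> (\<forall>j\<in>{1..b}. card {v\<in>e. C v = j} = count T j)"
proof
  have fe: "finite e" using assms finite_subset by blast
  assume "color_multiset C e = T"
  then show "\<forall>j\<in>{1..b}. card {v\<in>e. C v = j} = count T j"
    using count_color_multiset[OF fe] by auto
next
  have fe: "finite e" using assms finite_subset by blast
  assume A: "\<forall>j\<in>{1..b}. card {v\<in>e. C v = j} = count T j"
  show "color_multiset C e = T"
  proof (rule multiset_eqI)
    fix j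
    show "count (color_multiset C e) j = count T j"
    proof (cases "j \<in> {1..b}")
      case True then show ?thesis using A count_color_multiset[OF fe] by simp
    next
      case False
      then have "count T j = 0" using assms(3) by (auto simp: not_in_iff[symmetric])
      moreover have "{v\<in>e. C v = j} = {}" using False assms unfolding is_coloring_def by auto
      ultimately show ?thesis using count_color_multiset[OF fe] by (simp del: Collect_empty_eq)
    qed
  qed
qed

lemma card_type_class:
  assumes C: "is_coloring n b C" and T: "T \<in> color_multisets a b"
  shows "card {e\<in>{e. e \<subseteq> {1..n} \<and> card e = a}. color_multiset C e = T}
       = (\<Prod>j\<in>{1..b}. color_class_size n C j choose count T j)"
proof -
  define V where "V j = {v\<in>{1..n}. C v = j}" for j
  define S where "S = {e\<in>{e. e \<subseteq> {1..n} \<and> card e = a}. color_multiset C e = T}"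
  define P where "P = Pi\<^sub>E {1..b} (\<lambda>j. {D. D \<subseteq> V j \<and> card D = count T j})"
  have Tb: "set_mset T \<subseteq> {1..b}" and Ta: "size T = a" using T unfolding color_multisets_def by auto
  have eV: "e \<inter> V j = {v\<in>e. C v = j}" if "e \<subseteq> {1..n}" for e j using that unfolding V_def by auto
  have Un: "(\<Union>j\<in>{1..b}. e \<inter> V j) = e" if "e \<subseteq> {1..n}" for e
    using that C unfolding V_def is_coloring_def by auto
  have "bij_betw (\<lambda>e. restrict (\<lambda>j. e \<inter> V j) {1..b}) S P"
  proof (rule bij_betw_byWitness[where f'="\<lambda>g. \<Union>j\<in>{1..b}. g j"])
    show "\<forall>e\<in>S. (\<Union>j\<in>{1..b}. restrict (\<lambda>j. e \<inter> V j) {1..b} j) = e"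
      using Un unfolding S_def by auto
    show "\<forall>g\<in>P. restrict (\<lambda>j. (\<Union>i\<in>{1..b}. g i) \<inter> V j) {1..b} = g"
    proof
      fix g assume g: "g \<in> P"
      show "restrict (\<lambda>j. (\<Union>i\<in>{1..b}. g i) \<inter> V j) {1..b} = g"
      proof (rule PiE_ext[where k="{1..b}" and s="\<lambda>_. UNIV"])
        show "restrict (\<lambda>j. (\<Union>i\<in>{1..b}. g i) \<inter> V j) {1..b} \<in> Pi\<^sub>E {1..b} (\<lambda>_. UNIV)" by simp
        show "g \<in> Pi\<^sub>E {1..b} (\<lambda>_. UNIV)" using g unfolding P_def by (auto simp: PiE_def)
        fix j assume j: "j \<in> {1..b}"
        have "(\<Union>i\<in>{1..b}. g i) \<inter> V j = g j"
        proof
          show "g j \<subseteq> (\<Union>i\<in>{1..b}. g i) \<inter> V j" using g j unfolding P_def by auto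
          show "(\<Union>i\<in>{1..b}. g i) \<inter> V j \<subseteq> g j"
          proof
            fix v assume v: "v \<in> (\<Union>i\<in>{1..b}. g i) \<inter> V j"
            then obtain i where i: "i \<in> {1..b}" "v \<in> g i" by auto
            then have "v \<in> V i" using g unfolding P_def by auto
            then have "i = j" using v unfolding V_def by auto
            then show "v \<in> g j" using i by simp
          qed
        qed
        then show "restrict (\<lambda>j. (\<Union>i\<in>{1..b}. g i) \<inter> V j) {1..b} j = g j" using j by simp
      qed
    qed
    show "(\<lambda>e. restrict (\<lambda>j. e \<inter> V j) {1..b}) ` S \<subseteq> P"
    proof clarify
      fix e assume "e \<in> S"
      then have e: "e \<subseteq> {1..n}" "color_multiset C e = T" unfolding S_def by auto
      have "\<forall>j\<in>{1..b}. card {v\<in>e. C v = j} = count T j"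
        using color_multiset_eq_iff[OF e(1) C Tb] e(2) by simp
      then show "restrict (\<lambda>j. e \<inter> V j) {1..b} \<in> P" unfolding P_def using eV[OF e(1)] by auto
    qed
    show "(\<lambda>g. \<Union>j\<in>{1..b}. g j) ` P \<subseteq> S"
    proof clarify
      fix g assume g: "g \<in> P"
      define e where "e = (\<Union>j\<in>{1..b}. g j)"
      have gV: "g j \<subseteq> V j" "card (g j) = count T j" if "j \<in> {1..b}" for j
        using g that unfolding P_def by auto
      have e1: "e \<subseteq> {1..n}" unfolding e_def using gV unfolding V_def by blast
      have fV: "finite (V j)" for j unfolding V_def by simp
      have ge: "e \<inter> V j = g j" if j: "j \<in> {1..b}" for j
      proof
        show "g j \<subseteq> e \<inter> V j" using gV j unfolding e_def by auto
        show "e \<inter> V j \<subseteq> g j"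
        proof
          fix v assume v: "v \<in> e \<inter> V j"
          then obtain i where i: "i \<in> {1..b}" "v \<in> g i" unfolding e_def by auto
          then have "v \<in> V i" using gV by auto
          then have "i = j" using v unfolding V_def by auto
          then show "v \<in> g j" using i by simp
        qed
      qed
      have "card e = (\<Sum>j\<in>{1..b}. card (g j))" unfolding e_def
      proof (rule card_UN_disjoint)
        show "finite {1..b}" by simp
        show "\<forall>i\<in>{1..b}. finite (g i)" using gV fV finite_subset by blast
        show "\<forall>i\<in>{1..b}. \<forall>j\<in>{1..b}. i \<noteq> j \<longrightarrow> g i \<inter> g j = {}"
          using gV unfolding V_def by blast
      qed
      also have "\<dots> = (\<Sum>j\<in>{1..b}. count T j)" using gV by simp
      also have "\<dots> = a" using size_as_sum[OF Tb] Ta by simp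
      finally have e2: "card e = a" .
      have "color_multiset C e = T"
        using color_multiset_eq_iff[OF e1 C Tb] ge eV[OF e1] gV by simp
      then show "(\<Union>j\<in>{1..b}. g j) \<in> S" unfolding S_def using e1 e2 e_def by simp
    qed
  qed
  then have "card S = card P" by (rule bij_betw_same_card)
  also have "\<dots> = (\<Prod>j\<in>{1..b}. card {D. D \<subseteq> V j \<and> card D = count T j})"
    unfolding P_def by (simp add: card_PiE)
  also have "\<dots> = (\<Prod>j\<in>{1..b}. color_class_size n C j choose count T j)"
    unfolding color_class_size_def V_def by (intro prod.cong refl n_subsets) simp
  finally show ?thesis unfolding S_def .
qed



lemma finite_color_multisets: "finite (color_multisets a b)"
proof -
  have "color_multisets a b \<subseteq> mset ` {xs. set xs \<subseteq> {1..b} \<and> length xs = a}"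
  proof
    fix T assume T: "T \<in> color_multisets a b"
    obtain xs where "mset xs = T" using ex_mset by blast
    then show "T \<in> mset ` {xs. set xs \<subseteq> {1..b} \<and> length xs = a}"
      using T unfolding color_multisets_def by force
  qed
  moreover have "finite (mset ` {xs. set xs \<subseteq> {1..b} \<and> length xs = a})"
    by (intro finite_imageI finite_lists_length_eq) simp
  ultimately show ?thesis by (rule finite_subset)
qed

lemma bad_bound:
  fixes \<epsilon> :: real
  assumes "\<epsilon> > 0" "a \<le> n"
  shows "real (card {H \<in> hypergraphs a n M. \<not> good_hypergraph a b \<epsilon> n M H})
     \<le> real (b ^ n) * real (card (color_multisets a b)) *
        (2 * real (card (hypergraphs a n M)) * exp (- (\<epsilon>\<^sup>2 / (4 * (1 + \<epsilon>))) * real M))"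
proof -
  define U where "U = {e. e \<subseteq> {1..n} \<and> card e = a}"
  define F where "F = Pi\<^sub>E {1..n} (\<lambda>_. {1..b})"
  define TT where "TT = color_multisets a b"
  define S where "S C T = {e\<in>U. color_multiset C e = T}" for C T
  define B where "B C T = {H. H \<subseteq> U \<and> card H = M \<and>
            (real (card (H \<inter> S C T)) < (real (card (S C T)) / real (card U) - \<epsilon>) * real M \<or>
             (real (card (S C T)) / real (card U) + \<epsilon>) * real M < real (card (H \<inter> S C T)))}" for C T
  define \<delta> where "\<delta> = \<epsilon>\<^sup>2 / (4 * (1 + \<epsilon>))"
  have fU: "finite U" unfolding U_def by (simp add: finite_Collect_subsets)
  have cU: "card U = n choose a" unfolding U_def by (subst n_subsets) auto
  have Upos: "card U > 0" using cU assms by simp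
  have hyp: "hypergraphs a n M = {H. H \<subseteq> U \<and> card H = M}" unfolding hypergraphs_def U_def by simp
  have cHyp: "card (hypergraphs a n M) = card U choose M" unfolding hyp using fU by (rule n_subsets)
  have fF: "finite F" unfolding F_def by (simp add: finite_PiE)
  have cF: "card F = b ^ n" unfolding F_def by (simp add: card_PiE)
  have fTT: "finite TT" unfolding TT_def by (rule finite_color_multisets)
  have sub: "{H \<in> hypergraphs a n M. \<not> good_hypergraph a b \<epsilon> n M H} \<subseteq> (\<Union>C\<in>F. \<Union>T\<in>TT. B C T)"
  proof
    fix H assume "H \<in> {H \<in> hypergraphs a n M. \<not> good_hypergraph a b \<epsilon> n M H}"
    then have H: "H \<subseteq> U" "card H = M" and ng: "\<not> good_hypergraph a b \<epsilon> n M H"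
      unfolding hyp by auto
    from ng obtain C T where C: "is_coloring n b C" and T: "T \<in> TT"
      and nb: "\<not> ((pC a b n C T - \<epsilon>) * real M \<le> real (edges_with_type H C T) \<and>
        real (edges_with_type H C T) \<le> (pC a b n C T + \<epsilon>) * real M)"
      unfolding good_hypergraph_def TT_def by blast
    define C' where "C' = restrict C {1..n}"
    have C'F: "C' \<in> F" using C unfolding C'_def F_def is_coloring_def by auto
    have C'c: "is_coloring n b C'" using C unfolding C'_def is_coloring_def by auto
    have cm: "color_multiset C e = color_multiset C' e" if "e \<subseteq> {1..n}" for e
    proof -
      have "finite e" using that finite_subset by blast
      then show ?thesis unfolding color_multiset_def C'_def using that
        by (intro image_mset_cong) auto
    qed
    have ew: "edges_with_type H C T = card (H \<inter> S C' T)"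
    proof -
      have "{e\<in>H. color_multiset C e = T} = H \<inter> S C' T"
        using H cm unfolding S_def U_def by auto
      then show ?thesis unfolding edges_with_type_def by simp
    qed
    have ccs: "color_class_size n C j = color_class_size n C' j" for j
    proof -
      have "{v\<in>{1..n}. C v = j} = {v\<in>{1..n}. C' v = j}" unfolding C'_def by auto
      then show ?thesis unfolding color_class_size_def by simp
    qed
    have pp: "pC a b n C T = real (card (S C' T)) / real (card U)"
      unfolding pC_def S_def U_def
      using card_type_class[OF C'c T[unfolded TT_def]] cU[unfolded U_def] ccs by simp
    have "H \<in> B C' T" unfolding B_def using H nb ew pp by auto
    then show "H \<in> (\<Union>C\<in>F. \<Union>T\<in>TT. B C T)" using C'F T by blast
  qed
  have fB: "finite (\<Union>C\<in>F. \<Union>T\<in>TT. B C T)"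
    by (rule finite_subset[OF _ finite_Collect_subsets[OF fU]]) (auto simp: B_def)
  have "real (card {H \<in> hypergraphs a n M. \<not> good_hypergraph a b \<epsilon> n M H})
      \<le> real (card (\<Union>C\<in>F. \<Union>T\<in>TT. B C T))"
    using card_mono[OF fB sub] by simp
  also have "\<dots> \<le> (\<Sum>C\<in>F. \<Sum>T\<in>TT. real (card (B C T)))"
  proof -
    have "card (\<Union>C\<in>F. \<Union>T\<in>TT. B C T) \<le> (\<Sum>C\<in>F. card (\<Union>T\<in>TT. B C T))" by (rule card_UN_le[OF fF])
    also have "\<dots> \<le> (\<Sum>C\<in>F. \<Sum>T\<in>TT. card (B C T))" by (intro sum_mono card_UN_le[OF fTT])
    finally show ?thesis by (simp flip: of_nat_sum)
  qed
  also have "\<dots> \<le> (\<Sum>C\<in>F. \<Sum>T\<in>TT. 2 * real (card U choose M) * exp (- \<delta> * real M))"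
  proof (intro sum_mono)
    fix C T
    have "S C T \<subseteq> U" unfolding S_def by auto
    then show "real (card (B C T)) \<le> 2 * real (card U choose M) * exp (- \<delta> * real M)"
      unfolding B_def \<delta>_def using two_tail[OF fU _ Upos assms(1)] by blast
  qed
  also have "\<dots> = real (card F) * real (card TT) * (2 * real (card U choose M) * exp (- \<delta> * real M))"
    by simp
  finally show ?thesis unfolding cF TT_def cHyp \<delta>_def .
qed



theorem lemma11:
  fixes a b :: nat and \<epsilon> :: real and m :: "nat \<Rightarrow> nat"
  assumes "a \<ge> 2" and "b \<ge> 2" and "\<epsilon> > 0"
    and "filterlim (\<lambda>n. real (m n) / real n) at_top sequentially"
  shows "(\<lambda>n. real (card {H \<in> hypergraphs a n (m n). \<not> good_hypergraph a b \<epsilon> n (m n) H})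
               / real (card (hypergraphs a n (m n)))) \<longlonglongrightarrow> 0"
proof -
  define \<delta> where "\<delta> = \<epsilon>\<^sup>2 / (4 * (1 + \<epsilon>))"
  define K where "K = real (card (color_multisets a b))"
  define f where "f n = real (card {H \<in> hypergraphs a n (m n). \<not> good_hypergraph a b \<epsilon> n (m n) H})
               / real (card (hypergraphs a n (m n)))" for n
  define g where "g n = K * 2 * exp (- real n)" for n
  define c where "c = (ln (real b) + 1) / \<delta>"
  have \<delta>0: "\<delta> > 0" unfolding \<delta>_def using assms by simp
  have lb: "ln (real b) > 0" using assms by simp
  have c0: "c > 0" unfolding c_def using \<delta>0 lb by simp
  have K0: "K \<ge> 0" unfolding K_def by simp
  have gl: "g \<longlonglongrightarrow> 0"
  proof -
    have e: "exp (- real n) = exp (-1) ^ n" for n using exp_of_nat_mult[of n "-1::real"] by simp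
    have "(\<lambda>n. exp (-1::real) ^ n) \<longlonglongrightarrow> 0" by (rule LIMSEQ_realpow_zero) auto
    then have "(\<lambda>n. K * 2 * exp (-1::real) ^ n) \<longlonglongrightarrow> K * 2 * 0" by (intro tendsto_mult_left)
    then show ?thesis unfolding g_def e by simp
  qed
  have ev1: "eventually (\<lambda>n. c \<le> real (m n) / real n) sequentially"
    using assms(4) by (simp add: filterlim_at_top)
  have ev2: "eventually (\<lambda>n. a \<le> n) sequentially" by (rule eventually_ge_at_top)
  have "eventually (\<lambda>n. 0 \<le> f n \<and> f n \<le> g n) sequentially"
    using ev1 ev2
  proof eventually_elim
    case (elim n)
    have n0: "n > 0" using elim c0 by (cases n) auto
    have cm: "c * real n \<le> real (m n)" using elim n0 by (simp add: field_simps)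
    have "\<delta> * (c * real n) \<le> \<delta> * real (m n)" using cm \<delta>0 by simp
    moreover have "\<delta> * (c * real n) = (ln (real b) + 1) * real n" unfolding c_def using \<delta>0 by simp
    ultimately have dm: "(ln (real b) + 1) * real n \<le> \<delta> * real (m n)" by simp
    have bn: "real (b ^ n) = exp (real n * ln (real b))"
      using exp_of_nat_mult[of n "ln (real b)"] assms by simp
    define h where "h = real (card (hypergraphs a n (m n)))"
    have bb: "real (card {H \<in> hypergraphs a n (m n). \<not> good_hypergraph a b \<epsilon> n (m n) H})
       \<le> real (b ^ n) * K * (2 * h * exp (- \<delta> * real (m n)))"
      unfolding K_def h_def \<delta>_def using bad_bound[OF assms(3) elim(2)] by simp
    have key: "real (b ^ n) * K * 2 * exp (- \<delta> * real (m n)) \<le> g n"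
    proof -
      have "real (b ^ n) * exp (- \<delta> * real (m n)) = exp (real n * ln (real b) - \<delta> * real (m n))"
        unfolding bn by (simp add: exp_diff exp_minus field_simps)
      also have "\<dots> \<le> exp (- real n)" using dm by (simp add: algebra_simps)
      finally have "real (b ^ n) * exp (- \<delta> * real (m n)) \<le> exp (- real n)" .
      then have "K * 2 * (real (b ^ n) * exp (- \<delta> * real (m n))) \<le> K * 2 * exp (- real n)"
        using K0 by (intro mult_left_mono) auto
      then show ?thesis unfolding g_def by (simp add: mult_ac)
    qed
    have g0: "0 \<le> g n" unfolding g_def using K0 by simp
    show ?case
    proof (cases "h = 0")
      case True then show ?thesis unfolding f_def h_def using g0 by (simp add: h_def)
    next
      case False
      then have hp: "h > 0" unfolding h_def by simp
      have "f n \<le> real (b ^ n) * K * (2 * h * exp (- \<delta> * real (m n))) / h"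
        unfolding f_def h_def[symmetric] using bb hp by (intro divide_right_mono) auto
      also have "\<dots> = real (b ^ n) * K * 2 * exp (- \<delta> * real (m n))" using hp by simp
      finally show ?thesis using key unfolding f_def h_def by simp
    qed
  qed
  then have "f \<longlonglongrightarrow> 0"
    by (intro tendsto_sandwich[of "\<lambda>_. 0" f sequentially g 0]) (auto elim: eventually_mono simp: gl)
  then show ?thesis unfolding f_def .
qed


end
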